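(* Let $N\ge2$, $R>0$, and let $u\in C(B_R,(0,\infty))$ be separable in $B_R$. If $u$ is not radially symmetric with respect to the origin, then there exists $M\in O(N)$ such that: (i) (axial symmetry) for every $\alpha\in(0,R]$ and every $h\in[-\alpha,\alpha]$, $u_M$ is constant on $\{x\in S^{N-1}_\alpha:x_N=h\}$, i.e. $u_M$ is axially symmetric with respect to the $x_N$-axis; (ii) (monotonicity) for every $\alpha\in(0,R]$, the function $\theta\mapsto u_M(0_{N-2},\alpha\cos\theta,\alpha\sin\theta)$ is nonincreasing on $[\pi/2,3\pi/2]$.
   Context: $B_R$ is the closed ball of radius $R$ centered at $0$ in $\mathbb{R}^N$; $S^{N-1}_\alpha$ is the sphere of radius $\alpha$ centered at $0$; $O(N)$ is the orthogonal group and $u_M(x):=u(M^{-1}x)$; $0_k$ is the zero vector of $\mathbb{R}^k$. For an open half-space $H$, $\sigma_H$ is the reflection across $\partial H$. A function $u:B_R\to\mathbb{R}$ is separable in $B_R$ if for every open half-space $H\subset\mathbb{R}^N$ with $0\in\partial H$, either $u(x)\ge u(\sigma_Hx)$ for all $x\in H\cap B_R$, or $u(x)\le u(\sigma_Hx)$ for all $x\in H\cap B_R$. Radially symmetric with respect to the origin means $u(x)=u(y)$ whenever $|x|=|y|$. *)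

theory Defs
  imports "HOL-Analysis.Analysis"
begin

text \<open>Coordinates of R^N are indexed by a finite linearly ordered type 'n;
  the k-th coordinate x_k corresponds to the k-th smallest index.\<close>

definition last_idx :: "'n::{finite,linorder}" where
  "last_idx = Max UNIV"

definition second_last_idx :: "'n::{finite,linorder}" where
  "second_last_idx = Max (UNIV - {last_idx})"

definition refl_hyp :: "real^'n \<Rightarrow> real^'n \<Rightarrow> real^'n" where
  "refl_hyp a x = x - (2 * (a \<bullet> x) / (a \<bullet> a)) *\<^sub>R a"

text \<open>Open half-spaces H with 0 on the boundary are exactly {x. a . x > 0}, a \<noteq> 0.\<close>
definition separable_in :: "real \<Rightarrow> (real^'n \<Rightarrow> real) \<Rightarrow> bool" where
  "separable_in R u \<longleftrightarrow>
     (\<forall>a. a \<noteq> 0 \<longrightarrow>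
        (\<forall>x\<in>cball 0 R. a \<bullet> x > 0 \<longrightarrow> u x \<ge> u (refl_hyp a x)) \<or>
        (\<forall>x\<in>cball 0 R. a \<bullet> x > 0 \<longrightarrow> u x \<le> u (refl_hyp a x)))"

definition radially_symmetric_in :: "real \<Rightarrow> (real^'n \<Rightarrow> real) \<Rightarrow> bool" where
  "radially_symmetric_in R u \<longleftrightarrow>
     (\<forall>x\<in>cball 0 R. \<forall>y\<in>cball 0 R. norm x = norm y \<longrightarrow> u x = u y)"

definition rot_fun :: "real^'n^'n \<Rightarrow> (real^'n \<Rightarrow> real) \<Rightarrow> real^'n \<Rightarrow> real" where
  "rot_fun M u x = u (matrix_inv M *v x)"

definition circ_pt :: "real \<Rightarrow> real \<Rightarrow> real^'n::{finite,linorder}" where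
  "circ_pt a t = (\<chi> i. if i = last_idx then a * sin t
                        else if i = second_last_idx then a * cos t else 0)"

end

theory Submission imports Defs "HOL-Analysis.Analysis" begin

lemma abs_int_cont_compact:
  fixes f :: "'a::euclidean_space \<Rightarrow> 'b::euclidean_space"
  assumes "compact S" "continuous_on S f"
  shows "f absolutely_integrable_on S"
proof -
  have i: "integrable lborel (\<lambda>x. indicator S x *\<^sub>R f x)"
    by (rule borel_integrable_compact[OF assms])
  then show ?thesis
    unfolding set_integrable_def
    using integrable_completion[OF borel_measurable_integrable[OF i]] by simp
qed

lemma refl_inner: "a \<noteq> 0 \<Longrightarrow> a \<bullet> refl_hyp a x = - (a \<bullet> x)"
  unfolding refl_hyp_def by (simp add: inner_diff_right)

lemma refl_invol: "a \<noteq> 0 \<Longrightarrow> refl_hyp a (refl_hyp a x) = x"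
proof -
  assume a: "a \<noteq> 0"
  have "refl_hyp a (refl_hyp a x) = refl_hyp a x - (2 * (a \<bullet> refl_hyp a x) / (a \<bullet> a)) *\<^sub>R a"
    by (simp add: refl_hyp_def)
  also have "\<dots> = x" using refl_inner[OF a, of x] by (simp add: refl_hyp_def algebra_simps)
  finally show ?thesis .
qed

lemma refl_neg: "refl_hyp (-a) = refl_hyp a"
  by (rule ext) (simp add: refl_hyp_def)

lemma refl_linear: "linear (refl_hyp a)"
  unfolding refl_hyp_def
  by (rule linearI) (auto simp: inner_add_right algebra_simps add_divide_distrib scaleR_add_left)

lemma refl_norm: "a \<noteq> 0 \<Longrightarrow> norm (refl_hyp a x) = norm x"
proof -
  assume a: "a \<noteq> 0"
  have aa: "a \<bullet> a \<noteq> 0" using a by simp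
  have "(norm (refl_hyp a x))^2 = (norm x)^2"
    unfolding power2_norm_eq_inner refl_hyp_def using aa
    by (simp add: inner_diff_left inner_diff_right inner_commute[of x a] field_simps power2_eq_square)
  then show ?thesis by (simp add: power2_eq_iff_nonneg)
qed

lemma refl_orth: "a \<noteq> 0 \<Longrightarrow> orthogonal_transformation (refl_hyp a)"
  by (simp add: orthogonal_transformation refl_linear refl_norm)

lemma refl_cball: "a \<noteq> 0 \<Longrightarrow> x \<in> cball 0 R \<Longrightarrow> refl_hyp a x \<in> cball 0 R"
  by (simp add: refl_norm)

lemma refl_swap:
  assumes "norm x = norm y" "x \<noteq> y"
  shows "refl_hyp (x - y) x = y" "(x - y) \<bullet> x > 0"
proof -
  have ne: "(x - y) \<bullet> (x - y) > 0" using assms by simp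
  have xx: "x \<bullet> x = y \<bullet> y" using assms by (simp add: dot_square_norm)
  have e: "(x - y) \<bullet> (x - y) = 2 * ((x - y) \<bullet> x)"
    using xx by (simp add: inner_diff_left inner_diff_right inner_commute)
  show pos: "(x - y) \<bullet> x > 0" using ne e by linarith
  have t: "(x - y) \<bullet> x \<noteq> 0" using pos by simp
  have "2 * ((x - y) \<bullet> x) / ((x - y) \<bullet> (x - y)) = 2 * ((x - y) \<bullet> x) / (2 * ((x - y) \<bullet> x))"
    by (simp only: e)
  also have "\<dots> = 1" using t by simp
  finally have "2 * ((x - y) \<bullet> x) / ((x - y) \<bullet> (x - y)) = 1" .
  then show "refl_hyp (x - y) x = y" unfolding refl_hyp_def by (simp only: scaleR_one) simp
qed

lemma refl_sub_integral:
  fixes f :: "real^'m::{finite,wellorder} \<Rightarrow> real"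
  assumes a: "a \<noteq> 0" and f: "continuous_on (cball 0 R) f"
  shows "integral (cball 0 R) (\<lambda>x. f (refl_hyp a x)) = integral (cball 0 R) f"
proof -
  define F where "F = (\<lambda>x. f x *\<^sub>R (1::real^1))"
  have Fc: "continuous_on (cball 0 R) F" unfolding F_def by (intro continuous_intros f)
  have ot: "orthogonal_transformation (refl_hyp a)" by (rule refl_orth[OF a])
  have img: "refl_hyp a ` cball 0 R = cball 0 R"
    using image_orthogonal_transformation_cball[OF ot, of 0 R] ot
    by (simp add: linear_0 orthogonal_transformation_linear)
  have det: "\<bar>det (matrix (refl_hyp a))\<bar> = 1"
    using ot det_orthogonal_matrix orthogonal_transformation_matrix by fastforce
  have ai: "F absolutely_integrable_on (refl_hyp a ` cball 0 R)"
    using img abs_int_cont_compact[OF compact_cball Fc] by simp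
  have eq: "integral (cball 0 R) F = integral (cball 0 R) (F \<circ> refl_hyp a)"
    using integral_change_of_variables_linear[OF refl_linear[of a] disjI1[OF ai]] img det
    by simp
  have Fc2: "continuous_on (cball 0 R) (F \<circ> refl_hyp a)"
    by (rule continuous_on_compose[OF linear_continuous_on[OF refl_linear[THEN linear_conv_bounded_linear[THEN iffD1]]]])
       (use Fc img in simp)
  have i1: "F integrable_on cball 0 R" using abs_int_cont_compact[OF compact_cball Fc] set_lebesgue_integral_eq_integral(1) by blast
  have i2: "(F \<circ> refl_hyp a) integrable_on cball 0 R" using abs_int_cont_compact[OF compact_cball Fc2] set_lebesgue_integral_eq_integral(1) by blast
  have bl: "bounded_linear (\<lambda>v::real^1. v $ 1)" by (rule bounded_linear_vec_nth)
  have "integral (cball 0 R) f = integral (cball 0 R) ((\<lambda>v. v $ 1) \<circ> F)"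
    by (simp add: F_def o_def)
  also have "\<dots> = integral (cball 0 R) F $ 1" by (rule integral_linear[OF i1 bl])
  also have "\<dots> = integral (cball 0 R) (F \<circ> refl_hyp a) $ 1" using eq by simp
  also have "\<dots> = integral (cball 0 R) ((\<lambda>v. v $ 1) \<circ> (F \<circ> refl_hyp a))" by (rule integral_linear[OF i2 bl, symmetric])
  also have "\<dots> = integral (cball 0 R) (\<lambda>x. f (refl_hyp a x))" by (simp add: F_def o_def)
  finally show ?thesis by simp
qed


lemma cont_int_compact:
  fixes f :: "'a::euclidean_space \<Rightarrow> real"
  assumes "compact S" "continuous_on S f"
  shows "f integrable_on S"
  using abs_int_cont_compact[OF assms] set_lebesgue_integral_eq_integral(1) by blast

lemma meas_cball_pos:
  fixes w :: "'a::euclidean_space"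
  assumes "r > 0" shows "integral (cball w r) (\<lambda>x. 1::real) > 0"
proof -
  have "measure lebesgue (cball w r) = measure lborel (cball w r)"
    by simp
  moreover have "measure lebesgue (cball w r) = integral (cball w r) (\<lambda>x. 1::real)"
    by (rule lmeasure_integral[OF lmeasurable_cball])
  ultimately show ?thesis using content_cball_pos[OF assms, of w] by linarith
qed
lemma int_pos:
  fixes g :: "'a::euclidean_space \<Rightarrow> real"
  assumes R: "R > 0" and gc: "continuous_on (cball 0 R) g"
    and nn: "\<forall>x\<in>cball 0 R. 0 \<le> g x" and z: "z \<in> cball 0 R" and gz: "g z > 0"
  shows "integral (cball 0 R) g > 0"
proof -
  define c where "c = g z / 2"
  have c: "c > 0" using gz by (simp add: c_def)
  obtain d where d: "d > 0" "\<forall>y\<in>cball 0 R. dist y z < d \<longrightarrow> dist (g y) (g z) < c"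
    using gc z c unfolding continuous_on_iff by blast
  have "z \<in> closure (ball 0 R)" using z R by simp
  then obtain w where w: "w \<in> ball 0 R" "dist w z < d/2"
    using d(1) unfolding closure_approachable by (meson half_gt_zero)
  define \<rho> where "\<rho> = min (d/2) (R - norm w) / 2"
  have \<rho>: "\<rho> > 0" using w d by (simp add: \<rho>_def)
  have sub: "cball w \<rho> \<subseteq> cball 0 R"
  proof
    fix y assume "y \<in> cball w \<rho>"
    then have "dist w y \<le> \<rho>" by simp
    then have "norm y \<le> norm w + \<rho>" using norm_triangle_ineq[of w "y - w"]
      by (simp add: dist_norm norm_minus_commute)
    moreover have "min (d/2) (R - norm w) \<le> R - norm w" by simp
    moreover have "norm w < R" using w(1) by simp
    ultimately have "norm y \<le> R" unfolding \<rho>_def by argo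
    then show "y \<in> cball 0 R" by simp
  qed
  have big: "c \<le> g y" if y: "y \<in> cball w \<rho>" for y
  proof -
    have "dist y z \<le> dist y w + dist w z" by (rule dist_triangle)
    moreover have "dist y w \<le> \<rho>" using y by (simp add: dist_commute)
    moreover have "\<rho> \<le> d/4" unfolding \<rho>_def by (simp add: min_def)
    ultimately have "dist y z < d" using w(2) d(1) by linarith
    then have "dist (g y) (g z) < c" using d sub y by blast
    then show ?thesis unfolding c_def dist_real_def by linarith
  qed
  have gc2: "continuous_on (cball w \<rho>) g" using gc sub continuous_on_subset by blast
  have "0 < c * integral (cball w \<rho>) (\<lambda>x. 1::real)"
    using c meas_cball_pos[OF \<rho>, of w] by (rule mult_pos_pos)
  also have "\<dots> = integral (cball w \<rho>) (\<lambda>x. c * 1)" by (rule integral_mult_right[symmetric])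
  also have "\<dots> = integral (cball w \<rho>) (\<lambda>x. c)" by simp
  also have "\<dots> \<le> integral (cball w \<rho>) g"
    by (rule integral_le[OF integrable_on_const[OF lmeasurable_cball] cont_int_compact[OF compact_cball gc2] big])
  also have "\<dots> \<le> integral (cball 0 R) g"
    by (rule integral_subset_le[OF sub cont_int_compact[OF compact_cball gc2] cont_int_compact[OF compact_cball gc] nn])
  finally show ?thesis .
qed


definition goodP :: "real \<Rightarrow> (real^'n \<Rightarrow> real) \<Rightarrow> real^'n \<Rightarrow> bool" where
  "goodP R v a \<longleftrightarrow> (\<forall>x\<in>cball 0 R. a \<bullet> x > 0 \<longrightarrow> v (refl_hyp a x) \<le> v x)"

lemma good_integral:
  fixes v :: "real^'m::{finite,wellorder} \<Rightarrow> real"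
  assumes R: "R > 0" and vc: "continuous_on (cball 0 R) v" and a: "a \<noteq> 0"
    and good: "goodP R v a"
  shows "0 \<le> integral (cball 0 R) (\<lambda>x::real^'m::{finite,wellorder}. v x * (a \<bullet> x))"
    "\<And>z. z \<in> cball 0 R \<Longrightarrow> a \<bullet> z > 0 \<Longrightarrow> v (refl_hyp a z) < v z \<Longrightarrow>
        0 < integral (cball 0 R) (\<lambda>x::real^'m::{finite,wellorder}. v x * (a \<bullet> x))"
proof -
  define g where "g = (\<lambda>x. (v x - v (refl_hyp a x)) * (a \<bullet> x))"
  define f where "f = (\<lambda>x. v x * (a \<bullet> x))"
  have img: "refl_hyp a ` cball 0 R \<subseteq> cball 0 R" using refl_cball[OF a] by blast
  have vrc: "continuous_on (cball 0 R) (\<lambda>x. v (refl_hyp a x))"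
    by (rule continuous_on_compose2[OF vc linear_continuous_on[OF refl_linear[THEN linear_conv_bounded_linear[THEN iffD1]]] img])
  have fc: "continuous_on (cball 0 R) f" unfolding f_def by (intro continuous_intros vc)
  have hc: "continuous_on (cball 0 R) (\<lambda>x. v (refl_hyp a x) * (a \<bullet> x))" by (intro continuous_intros vrc)
  have gc: "continuous_on (cball 0 R) g" unfolding g_def by (intro continuous_intros vc vrc)
  have gnn: "\<forall>x\<in>cball 0 R. 0 \<le> g x"
  proof
    fix x :: "real^'m::{finite,wellorder}" assume x: "x \<in> cball 0 R"
    consider "a \<bullet> x > 0" | "a \<bullet> x = 0" | "a \<bullet> x < 0" by linarith
    then show "0 \<le> g x"
    proof cases
      case 1 then show ?thesis using good x unfolding goodP_def g_def by simp
    next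
      case 2 then show ?thesis unfolding g_def by simp
    next
      case 3
      have "a \<bullet> refl_hyp a x > 0" using 3 refl_inner[OF a] by simp
      then have "v (refl_hyp a (refl_hyp a x)) \<le> v (refl_hyp a x)"
        using good refl_cball[OF a x] unfolding goodP_def by blast
      then have "v x \<le> v (refl_hyp a x)" using refl_invol[OF a] by simp
      then show ?thesis using 3 unfolding g_def by (simp add: mult_nonpos_nonpos)
    qed
  qed
  have s: "integral (cball 0 R) (\<lambda>x. f (refl_hyp a x)) = integral (cball 0 R) f"
    by (rule refl_sub_integral[OF a fc])
  have fr: "f (refl_hyp a x) = - (v (refl_hyp a x) * (a \<bullet> x))" for x
    unfolding f_def using refl_inner[OF a] by simp
  have s2: "integral (cball 0 R) (\<lambda>x. v (refl_hyp a x) * (a \<bullet> x)) = - integral (cball 0 R) f"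
  proof -
    have "integral (cball 0 R) (\<lambda>x. v (refl_hyp a x) * (a \<bullet> x)) = integral (cball 0 R) (\<lambda>x. - f (refl_hyp a x))"
      using fr by simp
    also have "\<dots> = - integral (cball 0 R) (\<lambda>x. f (refl_hyp a x))" by (rule integral_neg)
    finally show ?thesis using s by simp
  qed
  have gi: "integral (cball 0 R) g = 2 * integral (cball 0 R) f"
  proof -
    have "integral (cball 0 R) g = integral (cball 0 R) (\<lambda>x. f x - v (refl_hyp a x) * (a \<bullet> x))"
      unfolding g_def f_def by (simp add: algebra_simps)
    also have "\<dots> = integral (cball 0 R) f - integral (cball 0 R) (\<lambda>x. v (refl_hyp a x) * (a \<bullet> x))"
      by (rule integral_diff[OF cont_int_compact[OF compact_cball fc] cont_int_compact[OF compact_cball hc]])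
    finally show ?thesis using s2 by simp
  qed
  have "0 \<le> integral (cball 0 R) g"
    by (rule integral_nonneg[OF cont_int_compact[OF compact_cball gc]]) (use gnn in blast)
  then show "0 \<le> integral (cball 0 R) (\<lambda>x. v x * (a \<bullet> x))" using gi unfolding f_def by simp
  fix z assume z: "z \<in> cball 0 R" "a \<bullet> z > 0" "v (refl_hyp a z) < v z"
  have "g z > 0" using z unfolding g_def by simp
  then have "0 < integral (cball 0 R) g" by (rule int_pos[OF R gc gnn z(1)])
  then show "0 < integral (cball 0 R) (\<lambda>x. v x * (a \<bullet> x))" using gi unfolding f_def by simp
qed

lemma core:
  fixes v :: "real^'m::{finite,wellorder} \<Rightarrow> real"
  assumes R: "R > 0" and vc: "continuous_on (cball 0 R) v"
    and sep: "\<forall>a. a \<noteq> 0 \<longrightarrow> goodP R v a \<or> goodP R v (-a)"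
    and x: "x \<in> cball 0 R" and y: "y \<in> cball 0 R" and xy: "norm x = norm y" "v x \<noteq> v y"
  shows "\<exists>p. p \<noteq> 0 \<and> (\<forall>e. e \<bullet> p > 0 \<longrightarrow> goodP R v e)"
proof -
  define m where "m = integral (cball 0 R) (\<lambda>x. v x *\<^sub>R x)"
  have mc: "continuous_on (cball 0 R) (\<lambda>x. v x *\<^sub>R x)" by (intro continuous_intros vc)
  have im: "(\<lambda>x. v x *\<^sub>R x) integrable_on cball 0 R"
    using abs_int_cont_compact[OF compact_cball mc] set_lebesgue_integral_eq_integral(1) by blast
  have psi: "integral (cball 0 R) (\<lambda>x. v x * (a \<bullet> x)) = a \<bullet> m" for a
    using integral_linear[OF im bounded_linear_inner_right[of a]] unfolding m_def by (simp add: o_def)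
  have strict: "\<exists>e z. e \<noteq> 0 \<and> goodP R v e \<and> z \<in> cball 0 R \<and> e \<bullet> z > 0 \<and> v (refl_hyp e z) < v z"
    if "x' \<in> cball 0 R" "y' \<in> cball 0 R" "norm x' = norm y'" "v y' < v x'" for x' y'
  proof -
    have ne: "x' \<noteq> y'" using that by auto
    define e where "e = x' - y'"
    have e0: "e \<noteq> 0" using ne by (simp add: e_def)
    have r1: "refl_hyp e x' = y'" "e \<bullet> x' > 0" using refl_swap[OF that(3) ne] by (simp_all add: e_def)
    have r2: "refl_hyp (y' - x') y' = x'" "(y' - x') \<bullet> y' > 0"
      using refl_swap[of y' x'] that(3) ne by auto
    have "\<not> goodP R v (-e)"
    proof
      assume "goodP R v (-e)"
      moreover have "-e = y' - x'" by (simp add: e_def)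
      ultimately have "v (refl_hyp (y' - x') y') \<le> v y'" using that(2) r2(2) unfolding goodP_def by auto
      then show False using r2(1) that(4) by simp
    qed
    then have "goodP R v e" using sep e0 by blast
    then show ?thesis using e0 r1 that(1,4) by auto
  qed
  obtain e z where ez: "e \<noteq> 0" "goodP R v e" "z \<in> cball 0 R" "e \<bullet> z > 0" "v (refl_hyp e z) < v z"
  proof (cases "v y < v x")
    case True then show ?thesis using strict[OF x y xy(1)] that by blast
  next
    case False then have "v x < v y" using xy(2) by simp
    then show ?thesis using strict[OF y x xy(1)[symmetric]] that by blast
  qed
  have "e \<bullet> m > 0" using good_integral(2)[OF R vc ez(1,2) ez(3,4,5)] psi by simp
  then have m0: "m \<noteq> 0" by auto
  show ?thesis
  proof (intro exI conjI allI impI)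
    show "m \<noteq> 0" by (rule m0)
  next
    fix a :: "real^'m::{finite,wellorder}" assume a: "a \<bullet> m > 0"
    then have a0: "a \<noteq> 0" by auto
    show "goodP R v a"
    proof (rule ccontr)
      assume "\<not> goodP R v a"
      then have "goodP R v (-a)" using sep a0 by blast
      then have "0 \<le> (-a) \<bullet> m" using good_integral(1)[OF R vc _ ] a0 psi by (metis neg_equal_0_iff_equal)
      then show False using a by simp
    qed
  qed
qed


lemma sep_good:
  fixes u :: "real^'n::finite \<Rightarrow> real"
  assumes "separable_in R u" "a \<noteq> 0"
  shows "goodP R u a \<or> goodP R u (-a)"
proof -
  have "(\<forall>x\<in>cball 0 R. a \<bullet> x > 0 \<longrightarrow> u x \<ge> u (refl_hyp a x)) \<or>
        (\<forall>x\<in>cball 0 R. a \<bullet> x > 0 \<longrightarrow> u x \<le> u (refl_hyp a x))"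
    using assms unfolding separable_in_def by blast
  then show ?thesis
  proof
    assume "\<forall>x\<in>cball 0 R. a \<bullet> x > 0 \<longrightarrow> u x \<ge> u (refl_hyp a x)"
    then show ?thesis unfolding goodP_def by blast
  next
    assume h: "\<forall>x\<in>cball 0 R. a \<bullet> x > 0 \<longrightarrow> u x \<le> u (refl_hyp a x)"
    have "goodP R u (-a)" unfolding goodP_def refl_neg
    proof (intro ballI impI)
      fix x :: "real^'n" assume x: "x \<in> cball 0 R" "-a \<bullet> x > 0"
      have "a \<bullet> refl_hyp a x > 0" using x(2) refl_inner[OF assms(2)] by simp
      then have "u (refl_hyp a x) \<le> u (refl_hyp a (refl_hyp a x))"
        using h refl_cball[OF assms(2) x(1)] by blast
      then show "u (refl_hyp a x) \<le> u x" using refl_invol[OF assms(2)] by simp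
    qed
    then show ?thesis by blast
  qed
qed

lemma K:
  fixes u :: "real^'n::finite \<Rightarrow> real"
  assumes uc: "continuous_on (cball 0 R) u" and p: "p \<noteq> 0"
    and good: "\<forall>e. e \<bullet> p > 0 \<longrightarrow> goodP R u e"
    and x: "x \<in> cball 0 R" and y: "y \<in> cball 0 R" and nxy: "norm x = norm y"
    and le: "p \<bullet> y \<le> p \<bullet> x"
  shows "u y \<le> u x"
proof (cases "x = y")
  case True then show ?thesis by simp
next
  case ne: False
  define d where "d = x - y"
  have d0: "d \<noteq> 0" using ne by (simp add: d_def)
  have rd: "refl_hyp d x = y" "d \<bullet> x > 0" using refl_swap[OF nxy ne] by (simp_all add: d_def)
  have dp: "d \<bullet> p \<ge> 0" using le by (simp add: d_def inner_commute[of _ p] inner_diff_right)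
  show ?thesis
  proof (cases "d \<bullet> p > 0")
    case True
    then have "goodP R u d" using good by blast
    then show ?thesis using x rd unfolding goodP_def by force
  next
    case False
    then have dp0: "d \<bullet> p = 0" using dp by simp
    define A where "A = (\<lambda>k::nat. d + (1 / real k) *\<^sub>R p)"
    have Alim: "A \<longlonglongrightarrow> d" unfolding A_def
      using tendsto_add[OF tendsto_const tendsto_scaleR[OF lim_1_over_n tendsto_const], of d p] by simp
    have Ap: "A k \<bullet> p > 0" if "k \<ge> 1" for k
      using that p dp0 by (simp add: A_def inner_add_left)
    have A0: "A k \<noteq> 0" if "k \<ge> 1" for k using Ap[OF that] by auto
    have lim1: "(\<lambda>k. A k \<bullet> x) \<longlonglongrightarrow> d \<bullet> x" by (intro tendsto_intros Alim)
    have ev1: "eventually (\<lambda>k. A k \<bullet> x > 0) sequentially"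
      using order_tendstoD(1)[OF lim1 rd(2)] .
    have lim2: "(\<lambda>k. refl_hyp (A k) x) \<longlonglongrightarrow> refl_hyp d x"
      unfolding refl_hyp_def using d0 by (intro tendsto_intros Alim) auto
    have ev2: "eventually (\<lambda>k. refl_hyp (A k) x \<in> cball 0 R) sequentially"
      using eventually_ge_at_top[of 1] by eventually_elim (use x refl_cball A0 in blast)
    have lim3: "(\<lambda>k. u (refl_hyp (A k) x)) \<longlonglongrightarrow> u y"
      using continuous_on_tendsto_compose[OF uc lim2 _ ev2] rd y by simp
    have ev3: "eventually (\<lambda>k. u (refl_hyp (A k) x) \<le> u x) sequentially"
      using eventually_conj[OF ev1 eventually_ge_at_top[of 1]]
    proof eventually_elim
      case (elim k)
      then have "goodP R u (A k)" using good Ap by blast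
      then show ?case using elim x unfolding goodP_def by blast
    qed
    show ?thesis by (rule tendsto_le[OF trivial_limit_sequentially tendsto_const lim3 ev3])
  qed
qed


typedef 'a wo = "UNIV :: 'a set" by auto

instance wo :: (finite) finite
proof
  have "(UNIV :: 'a wo set) = Abs_wo ` UNIV"
    using type_definition.Abs_image[OF type_definition_wo] by auto
  moreover have "finite (range (Abs_wo :: 'a \<Rightarrow> 'a wo))" by (rule finite_imageI) simp
  ultimately show "finite (UNIV :: 'a wo set)" by simp
qed

instantiation wo :: ("{finite,linorder}") wellorder
begin
definition less_eq_wo :: "'a wo \<Rightarrow> 'a wo \<Rightarrow> bool" where "less_eq_wo x y \<longleftrightarrow> Rep_wo x \<le> Rep_wo y"
definition less_wo :: "'a wo \<Rightarrow> 'a wo \<Rightarrow> bool" where "less_wo x y \<longleftrightarrow> Rep_wo x < Rep_wo y"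
instance
proof
  show "(x < y) = (x \<le> y \<and> \<not> y \<le> x)" for x y :: "'a wo"
    unfolding less_eq_wo_def less_wo_def by auto
  show "x \<le> x" for x :: "'a wo" unfolding less_eq_wo_def by simp
  show "x \<le> y \<Longrightarrow> y \<le> z \<Longrightarrow> x \<le> z" for x y z :: "'a wo" unfolding less_eq_wo_def by simp
  show "x \<le> y \<Longrightarrow> y \<le> x \<Longrightarrow> x = y" for x y :: "'a wo"
    unfolding less_eq_wo_def by (simp add: Rep_wo_inject)
  show "x \<le> y \<or> y \<le> x" for x y :: "'a wo" unfolding less_eq_wo_def by auto
  show "P a" if step: "\<And>x. (\<And>y. y < x \<Longrightarrow> P y) \<Longrightarrow> P x" for P and a :: "'a wo"
  proof -
    have "wf {(x, y). (x::'a wo) < y}"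
    proof (rule finite_acyclic_wf)
      show "finite {(x, y). (x::'a wo) < y}" by simp
      show "acyclic {(x, y). (x::'a wo) < y}"
      proof -
        have tr: "trans {(x, y). (x::'a wo) < y}" by (auto simp: trans_def less_wo_def)
        show ?thesis unfolding acyclic_irrefl trancl_id[OF tr] by (auto simp: irrefl_def less_wo_def)
      qed
    qed
    then show ?thesis
      by (rule wf_induct) (use step in auto)
  qed
qed
end


definition Phi :: "real^('n wo) \<Rightarrow> real^'n" where "Phi y = (\<chi> i. y $ Abs_wo i)"
definition Psi :: "real^'n \<Rightarrow> real^('n wo)" where "Psi x = (\<chi> j. x $ Rep_wo j)"

lemma Phi_Psi [simp]: "Phi (Psi x) = x"
  by (simp add: Phi_def Psi_def vec_eq_iff Abs_wo_inverse)

lemma Psi_Phi [simp]: "Psi (Phi y) = y"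
  by (simp add: Phi_def Psi_def vec_eq_iff Rep_wo_inverse)

lemma Phi_inner [simp]: "Phi (a::real^('n::finite wo)) \<bullet> Phi b = a \<bullet> b"
proof -
  have inj: "inj (Abs_wo :: 'n \<Rightarrow> 'n wo)" by (metis Abs_wo_inverse UNIV_I injI)
  have im: "range (Abs_wo :: 'n \<Rightarrow> 'n wo) = UNIV"
    using type_definition.Abs_image[OF type_definition_wo] by auto
  have "Phi a \<bullet> Phi b = (\<Sum>i\<in>UNIV. a $ Abs_wo i * b $ Abs_wo i)"
    by (simp add: inner_vec_def Phi_def)
  also have "\<dots> = (\<Sum>j\<in>range Abs_wo. a $ j * b $ j)"
    by (simp add: sum.reindex[OF inj] o_def)
  also have "\<dots> = a \<bullet> b" by (simp add: im inner_vec_def)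
  finally show ?thesis .
qed

lemma Phi_linear: "linear (Phi :: real^('n::finite wo) \<Rightarrow> real^'n)"
  by (rule linearI) (simp_all add: Phi_def vec_eq_iff)

lemma Phi_norm [simp]: "norm (Phi (a::real^('n::finite wo))) = norm a"
  by (simp add: norm_eq_sqrt_inner)

lemma Psi_norm [simp]: "norm (Psi (x::real^('n::finite))) = norm x"
  by (metis Phi_Psi Phi_norm)

lemma Phi_refl: "Phi (refl_hyp a (y::real^('n::finite wo))) = refl_hyp (Phi a) (Phi y)"
proof -
  have l: "Phi (y - c *\<^sub>R a) = Phi y - c *\<^sub>R Phi a" for c by (simp add: Phi_def vec_eq_iff)
  show ?thesis unfolding refl_hyp_def l by simp
qed

lemma Phi_zero_iff [simp]: "Phi (a::real^('n::finite wo)) = 0 \<longleftrightarrow> a = 0"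
  by (metis Phi_norm norm_eq_zero)

lemma goodP_Phi:
  fixes u :: "real^'n::finite \<Rightarrow> real"
  shows "goodP R (\<lambda>y. u (Phi y)) a \<longleftrightarrow> goodP R u (Phi a)"
proof
  assume h: "goodP R (\<lambda>y. u (Phi y)) a"
  show "goodP R u (Phi a)" unfolding goodP_def
  proof (intro ballI impI)
    fix x :: "real^'n" assume x: "x \<in> cball 0 R" "Phi a \<bullet> x > 0"
    have "Psi x \<in> cball 0 R" "a \<bullet> Psi x > 0" using x by (simp, metis Phi_Psi Phi_inner)
    then have "u (Phi (refl_hyp a (Psi x))) \<le> u (Phi (Psi x))" using h unfolding goodP_def by blast
    then show "u (refl_hyp (Phi a) x) \<le> u x" by (simp add: Phi_refl)
  qed
next
  assume h: "goodP R u (Phi a)"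
  show "goodP R (\<lambda>y. u (Phi y)) a" unfolding goodP_def
  proof (intro ballI impI)
    fix y :: "real^('n wo)" assume y: "y \<in> cball 0 R" "a \<bullet> y > 0"
    have "Phi y \<in> cball 0 R" "Phi a \<bullet> Phi y > 0" using y by simp_all
    then have "u (refl_hyp (Phi a) (Phi y)) \<le> u (Phi y)" using h unfolding goodP_def by blast
    then show "u (Phi (refl_hyp a y)) \<le> u (Phi y)" by (simp add: Phi_refl)
  qed
qed

lemma exists_p:
  fixes u :: "real^'n::{finite,linorder} \<Rightarrow> real"
  assumes R: "R > 0" and uc: "continuous_on (cball 0 R) u" and sep: "separable_in R u"
    and nr: "\<not> radially_symmetric_in R u"
  shows "\<exists>p. p \<noteq> 0 \<and> (\<forall>e. e \<bullet> p > 0 \<longrightarrow> goodP R u e)"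
proof -
  define v where "v = (\<lambda>y::real^('n wo). u (Phi y))"
  have img: "Phi ` cball 0 R \<subseteq> cball 0 R" by auto
  have vc: "continuous_on (cball 0 R) v" unfolding v_def
    by (rule continuous_on_compose2[OF uc linear_continuous_on[OF Phi_linear[THEN linear_conv_bounded_linear[THEN iffD1]]] img])
  have sepv: "\<forall>a. a \<noteq> 0 \<longrightarrow> goodP R v a \<or> goodP R v (-a)"
  proof (intro allI impI)
    fix a :: "real^('n wo)" assume a: "a \<noteq> 0"
    have "Phi (-a) = - Phi a" by (simp add: Phi_def vec_eq_iff)
    then show "goodP R v a \<or> goodP R v (-a)"
      using sep_good[OF sep, of "Phi a"] a unfolding v_def goodP_Phi by simp
  qed
  obtain x y where xy: "x \<in> cball 0 R" "y \<in> cball 0 R" "norm x = norm y" "u x \<noteq> u y"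
    using nr unfolding radially_symmetric_in_def by blast
  have "Psi x \<in> cball 0 R" "Psi y \<in> cball 0 R" "norm (Psi x) = norm (Psi y)" "v (Psi x) \<noteq> v (Psi y)"
    using xy by (simp_all add: v_def)
  from core[OF R vc sepv this] obtain p' where p': "p' \<noteq> 0" "\<forall>e. e \<bullet> p' > 0 \<longrightarrow> goodP R v e"
    by blast
  show ?thesis
  proof (intro exI conjI allI impI)
    show "Phi p' \<noteq> 0" using p' by simp
    fix e :: "real^'n::{finite,linorder}" assume e: "e \<bullet> Phi p' > 0"
    have "Psi e \<bullet> p' > 0" using e by (metis Phi_Psi Phi_inner)
    then have "goodP R v (Psi e)" using p' by blast
    then show "goodP R u e" unfolding v_def goodP_Phi by simp
  qed
qed


lemma idx_ne:
  assumes "CARD('n::{finite,linorder}) \<ge> 2"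
  shows "(last_idx::'n) \<noteq> second_last_idx"
proof -
  have "UNIV - {last_idx::'n} \<noteq> {}"
  proof
    assume "UNIV - {last_idx::'n} = {}"
    then have "(UNIV::'n set) \<subseteq> {last_idx}" by blast
    then have "CARD('n) \<le> 1" by (metis card.empty card_insert_disjoint card_mono empty_iff finite.intros(1) insert_absorb2 le_refl order_trans  finite_insert One_nat_def card_1_singleton_iff)
    then show False using assms by simp
  qed
  then have "second_last_idx \<in> UNIV - {last_idx::'n}"
    unfolding second_last_idx_def by (intro Max_in) auto
  then show ?thesis by auto
qed

lemma circ_last: "circ_pt a t $ last_idx = a * sin t"
  by (simp add: circ_pt_def)

lemma circ_norm:
  fixes a :: real
  assumes "(last_idx::'n::{finite,linorder}) \<noteq> second_last_idx" "a \<ge> 0"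
  shows "norm (circ_pt a t :: real^'n::{finite,linorder}) = a"
proof -
  have e: "(circ_pt a t :: real^'n::{finite,linorder}) = (a * sin t) *\<^sub>R axis last_idx 1 + (a * cos t) *\<^sub>R axis second_last_idx 1"
    using assms(1) by (auto simp: circ_pt_def vec_eq_iff axis_def)
  have "(circ_pt a t :: real^'n::{finite,linorder}) \<bullet> circ_pt a t = (a * sin t)^2 + (a * cos t)^2"
    unfolding e using assms(1) by (simp add: inner_add_left inner_add_right inner_axis_axis power2_eq_square)
  also have "\<dots> = a^2" by (simp add: power_mult_distrib algebra_simps flip: distrib_left)
  finally show ?thesis using assms(2) by (simp add: norm_eq_sqrt_inner)
qed

lemma sin_mono_half:
  assumes "pi/2 \<le> s" "s \<le> t" "t \<le> 3*pi/2"
  shows "sin t \<le> sin s"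
proof -
  have "cos (t - pi/2) \<le> cos (s - pi/2)"
    by (rule cos_monotone_0_pi_le) (use assms in auto)
  then show ?thesis by (simp add: cos_diff)
qed


theorem theorem2p1:
  fixes u :: "real^'n::{finite,linorder} \<Rightarrow> real" and R :: real
  assumes "CARD('n) \<ge> 2"
    and "R > 0"
    and "continuous_on (cball 0 R) u"
    and "\<forall>x\<in>cball 0 R. u x > 0"
    and "separable_in R u"
    and "\<not> radially_symmetric_in R u"
  shows "\<exists>M :: real^'n::{finite,linorder}^'n::{finite,linorder}. orthogonal_matrix M \<and>
     (\<forall>\<alpha>\<in>{0<..R}. \<forall>h\<in>{-\<alpha>..\<alpha>}. \<forall>x y.
        norm x = \<alpha> \<and> norm y = \<alpha> \<and> x $ last_idx = h \<and> y $ last_idx = h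
        \<longrightarrow> rot_fun M u x = rot_fun M u y) \<and>
     (\<forall>\<alpha>\<in>{0<..R}. \<forall>s t. pi/2 \<le> s \<and> s \<le> t \<and> t \<le> 3*pi/2
        \<longrightarrow> rot_fun M u (circ_pt \<alpha> t) \<le> rot_fun M u (circ_pt \<alpha> s))"
proof -
  obtain p :: "real^'n::{finite,linorder}" where p: "p \<noteq> 0" "\<forall>e. e \<bullet> p > 0 \<longrightarrow> goodP R u e"
    using exists_p[OF assms(2,3,5,6)] by blast
  define q where "q = p /\<^sub>R norm p"
  have nq: "norm q = 1" using p(1) by (simp add: q_def)
  obtain f :: "real^'n::{finite,linorder} \<Rightarrow> real^'n::{finite,linorder}" where f: "orthogonal_transformation f" "f (axis last_idx 1) = q"
    using orthogonal_transformation_exists[of "axis last_idx (1::real)" q] nq by auto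
  define M where "M = transpose (matrix f)"
  have om: "orthogonal_matrix (matrix f)" using f(1) orthogonal_transformation_matrix by blast
  have oM: "orthogonal_matrix M" using om by (simp add: M_def)
  have A: "M ** matrix f = mat 1" "matrix f ** M = mat 1"
    using om unfolding orthogonal_matrix_def M_def by auto
  have inv: "matrix_inv M = matrix f"
  proof -
    have ex: "\<exists>B. M ** B = mat 1 \<and> B ** M = mat 1" using A by blast
    obtain B where B: "M ** B = mat 1" "B ** M = mat 1" "matrix_inv M = B"
      using someI_ex[OF ex] unfolding matrix_inv_def by blast
    have "B = (matrix f ** M) ** B" using A by (simp add: matrix_mul_lid)
    also have "\<dots> = matrix f ** (M ** B)" by (simp add: matrix_mul_assoc)
    also have "\<dots> = matrix f" using B by (simp add: matrix_mul_rid)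
    finally show ?thesis using B by simp
  qed
  have lf: "linear f" using f(1) orthogonal_transformation_linear by blast
  have rot: "rot_fun M u x = u (f x)" for x
    unfolding rot_fun_def inv using fun_cong[OF matrix_vector_mul(2)[OF lf], of x] by simp
  have pf: "p \<bullet> f x = norm p * x $ last_idx" for x
  proof -
    have "p = norm p *\<^sub>R q" using p(1) by (simp add: q_def)
    then have "p \<bullet> f x = norm p * (f (axis last_idx 1) \<bullet> f x)" using f(2)
      by (metis inner_scaleR_left)
    also have "f (axis last_idx 1) \<bullet> f x = axis last_idx 1 \<bullet> x"
      using f(1) unfolding orthogonal_transformation_def by blast
    finally show ?thesis by (simp add: inner_axis')
  qed
  have key: "u (f y) \<le> u (f x)" if "norm x = \<alpha>" "norm y = \<alpha>" "\<alpha> \<le> R" "y $ last_idx \<le> x $ last_idx" for x y \<alpha>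
  proof (rule K[OF assms(3) p(1,2)])
    show "f x \<in> cball 0 R" "f y \<in> cball 0 R" using that f(1) by (simp_all add: orthogonal_transformation_norm)
    show "norm (f x) = norm (f y)" using that f(1) by (simp add: orthogonal_transformation_norm)
    show "p \<bullet> f y \<le> p \<bullet> f x" unfolding pf using that by (simp add: mult_left_mono)
  qed
  have ne: "(last_idx::'n::{finite,linorder}) \<noteq> second_last_idx" by (rule idx_ne[OF assms(1)])
  show ?thesis
  proof (intro exI conjI ballI allI impI)
    show "orthogonal_matrix M" by (rule oM)
  next
    fix \<alpha> h and x y :: "real^'n::{finite,linorder}"
    assume a: "\<alpha> \<in> {0<..R}" and h: "norm x = \<alpha> \<and> norm y = \<alpha> \<and> x $ last_idx = h \<and> y $ last_idx = h"
    show "rot_fun M u x = rot_fun M u y"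
      unfolding rot using key[of x \<alpha> y] key[of y \<alpha> x] a h by force
  next
    fix \<alpha> s t :: real
    assume a: "\<alpha> \<in> {0<..R}" and st: "pi/2 \<le> s \<and> s \<le> t \<and> t \<le> 3*pi/2"
    have "sin t \<le> sin s" using sin_mono_half st by blast
    then have "\<alpha> * sin t \<le> \<alpha> * sin s" using a by (simp add: mult_left_mono)
    then have l: "circ_pt \<alpha> t $ last_idx \<le> (circ_pt \<alpha> s :: real^'n::{finite,linorder}) $ last_idx"
      by (simp only: circ_last)
    have n1: "norm (circ_pt \<alpha> s :: real^'n::{finite,linorder}) = \<alpha>" "norm (circ_pt \<alpha> t :: real^'n::{finite,linorder}) = \<alpha>"
      using a circ_norm[OF ne] by auto
    show "rot_fun M u (circ_pt \<alpha> t) \<le> rot_fun M u (circ_pt \<alpha> s)"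
      unfolding rot by (rule key[OF n1]) (use a l in auto)
  qed
qed

end
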